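(* Let $r>1$ and integers $N\ge1$, $K\ge2$. For $p=(p^1,\dots,p^K)$ let $z^i=(\sum_{j=1}^ip^j)^N-(\sum_{j=1}^{i-1}p^j)^N$ and $f(p)=\frac{p^K}{z^K}\sum_{i=1}^{K-1}\frac{z^i}{\sum_{j=i}^Kp^j}$. Then the supremum of $f(p)$ over all $p$ with $rp^K\ge1$, $\sum_ip^i=1$, $p^i>0$ for all $i$ equals the supremum of $f(p)$ over all $p$ with $rp^K=1$, $\sum_ip^i=1$, $p^i>0$ for all $i$. *)

theory Defs
  imports "HOL-Analysis.Analysis"
begin

text \<open>Vectors p = (p^1,...,p^K) are functions nat => real, only indices 1..K matter.\<close>

definition zz :: "nat \<Rightarrow> (nat \<Rightarrow> real) \<Rightarrow> nat \<Rightarrow> real" where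
  "zz N p i = (\<Sum>j=1..i. p j) ^ N - (\<Sum>j=1..i-1. p j) ^ N"

definition ff :: "nat \<Rightarrow> nat \<Rightarrow> (nat \<Rightarrow> real) \<Rightarrow> real" where
  "ff N K p = p K / zz N p K * (\<Sum>i=1..K-1. zz N p i / (\<Sum>j=i..K. p j))"

definition feasible_ge :: "real \<Rightarrow> nat \<Rightarrow> (nat \<Rightarrow> real) set" where
  "feasible_ge r K = {p. (\<forall>j. j \<notin> {1..K} \<longrightarrow> p j = 0) \<and> r * p K \<ge> 1 \<and>
      (\<Sum>i=1..K. p i) = 1 \<and> (\<forall>i\<in>{1..K}. p i > 0)}"

definition feasible_eq :: "real \<Rightarrow> nat \<Rightarrow> (nat \<Rightarrow> real) set" where
  "feasible_eq r K = {p. (\<forall>j. j \<notin> {1..K} \<longrightarrow> p j = 0) \<and> r * p K = 1 \<and>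
      (\<Sum>i=1..K. p i) = 1 \<and> (\<forall>i\<in>{1..K}. p i > 0)}"

end

theory Submission
  imports Defs
begin

lemma phi_mono:
  fixes b b' :: real
  assumes "0 < b" "b \<le> b'" "b' < 1" "N \<ge> 1"
  shows "b^N * (1-b) / (1-b^N) \<le> b'^N * (1-b') / (1-b'^N)"
proof -
  define G where "G x = (\<Sum>i<N. x^i)" for x :: real
  have eq: "1 - x^N = (1-x) * G x" for x :: real unfolding G_def by (rule one_diff_power_eq)
  have Gpos: "G x > 0" if "x \<ge> 0" for x
  proof -
    have "G x = (\<Sum>i\<in>{0} \<union> {1..<N}. x^i)" unfolding G_def
      by (rule sum.cong) (use assms(4) in auto)
    also have "\<dots> = 1 + (\<Sum>i\<in>{1..<N}. x^i)" by (subst sum.union_disjoint) auto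
    also have "\<dots> > 0" using that by (simp add: add_pos_nonneg sum_nonneg)
    finally show ?thesis .
  qed
  have b'pos: "0 < b'" using assms by linarith
  have "b^N * (1-b) / (1-b^N) = b^N / G b" using assms by (simp add: eq)
  moreover have "b'^N * (1-b') / (1-b'^N) = b'^N / G b'" using assms by (simp add: eq)
  moreover have "b^N / G b \<le> b'^N / G b'"
  proof -
    have "b^N * G b' \<le> b'^N * G b"
      unfolding G_def sum_distrib_left
    proof (rule sum_mono)
      fix k assume k: "k \<in> {..<N}"
      then have "N = k + (N - k)" by auto
      then have e1: "b^N = b^k * b^(N-k)" and e2: "b'^N = b'^k * b'^(N-k)"
        by (metis power_add)+
      have "b^(N-k) \<le> b'^(N-k)" using assms by (intro power_mono) auto
      then have "b^k * b'^k * b^(N-k) \<le> b^k * b'^k * b'^(N-k)"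
        using assms b'pos by (intro mult_left_mono) auto
      then show "b^N * b'^k \<le> b'^N * b^k" unfolding e1 e2 by (simp add: algebra_simps)
    qed
    then show ?thesis using Gpos[of b] Gpos[of b'] assms b'pos
      by (simp add: divide_simps)
  qed
  ultimately show ?thesis by simp
qed

lemma split_sum:
  fixes f :: "nat \<Rightarrow> real"
  assumes "1 \<le> i" "i \<le> K"
  shows "(\<Sum>j=1..K. f j) = (\<Sum>j=1..i-1. f j) + (\<Sum>j=i..K. f j)"
proof -
  have "{1..K} = {1..i-1} \<union> {i..K}" using assms by auto
  moreover have "{1..i-1} \<inter> {i..K} = {}" using assms by auto
  ultimately show ?thesis by (simp add: sum.union_disjoint)
qed

lemma key:
  fixes r :: real and N K :: nat
  assumes r: "r > 1" and N: "N \<ge> 1" and K: "K \<ge> 2" and p: "p \<in> feasible_ge r K"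
  shows "\<exists>q\<in>feasible_eq r K. ff N K p \<le> ff N K q"
proof -
  have pz: "\<And>j. j \<notin> {1..K} \<Longrightarrow> p j = 0" and pK: "r * p K \<ge> 1"
    and ps: "(\<Sum>i=1..K. p i) = 1" and ppos: "\<And>i. i\<in>{1..K} \<Longrightarrow> p i > 0"
    using p unfolding feasible_ge_def by auto
  have pnn: "p j \<ge> 0" for j using pz ppos by (cases "j \<in> {1..K}") (auto intro: less_imp_le)
  define S where "S f i = (\<Sum>j=1..i. f j)" for f :: "nat \<Rightarrow> real" and i
  define b where "b = 1 - p K"
  define b' where "b' = 1 - 1/r"
  have SK1: "S p (K-1) = b"
    using split_sum[of K K p] K ps unfolding S_def b_def by simp
  have p1: "p 1 > 0" using ppos K by auto
  have "S p (K-1) \<ge> p 1" unfolding S_def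
    using K pnn by (intro member_le_sum) auto
  hence bpos: "b > 0" using SK1 p1 by simp
  have bb': "b \<le> b'" unfolding b_def b'_def using pK r by (simp add: field_simps)
  have b'1: "b' < 1" using r unfolding b'_def by simp
  define c where "c = b' / b"
  have c1: "c \<ge> 1" unfolding c_def using bpos bb' by simp
  define q where "q j = (if j = K then 1/r else if j \<in> {1..K-1} then c * p j else 0)" for j
  have Sq: "S q i = c * S p i" if "i \<le> K - 1" for i
    unfolding S_def sum_distrib_left using that K by (intro sum.cong) (auto simp: q_def)
  have Smono: "S p i \<le> S p j" if "i \<le> j" for i j
    unfolding S_def using that pnn by (intro sum_mono2) auto
  have Snn: "S p i \<ge> 0" for i unfolding S_def using pnn by (simp add: sum_nonneg)
  have qsum: "(\<Sum>i=1..K. q i) = 1"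
  proof -
    have "(\<Sum>i=1..K. q i) = S q (K-1) + (\<Sum>j=K..K. q j)"
      using split_sum[of K K q] K unfolding S_def by simp
    also have "\<dots> = c * b + 1/r" using Sq[of "K-1"] SK1 by (simp add: q_def)
    also have "\<dots> = 1" unfolding c_def b'_def using bpos by simp
    finally show ?thesis .
  qed
  have qeq: "q \<in> feasible_eq r K"
    unfolding feasible_eq_def using qsum r c1 ppos K
    by (auto simp: q_def intro!: mult_pos_pos)
  have tail: "(\<Sum>j=i..K. f j) = 1 - S f (i-1)" if "(\<Sum>j=1..K. f j) = 1" "1 \<le> i" "i \<le> K" for f i
    using split_sum[of i K f] that unfolding S_def by simp
  have zzS: "zz N f i = S f i ^ N - S f (i-1) ^ N" for f i unfolding zz_def S_def by simp
  have ffp: "ff N K p = p K / (1 - b^N) * (\<Sum>i=1..K-1. zz N p i / (1 - S p (i-1)))"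
  proof -
    have "zz N p K = 1 - b^N" using zzS[of p K] SK1 ps unfolding S_def by simp
    moreover have "(\<Sum>i=1..K-1. zz N p i / (\<Sum>j=i..K. p j)) = (\<Sum>i=1..K-1. zz N p i / (1 - S p (i-1)))"
      using tail[OF ps] by (intro sum.cong refl) auto
    ultimately show ?thesis unfolding ff_def by simp
  qed
  have SqK1: "S q (K-1) = b'" using Sq[of "K-1"] SK1 bpos unfolding c_def by simp
  have ffq: "ff N K q = (1 - b') / (1 - b'^N) * (\<Sum>i=1..K-1. c^N * zz N p i / (1 - c * S p (i-1)))"
  proof -
    have "S q K = 1" using qsum unfolding S_def by simp
    hence "zz N q K = 1 - b'^N" using zzS[of q K] SqK1 by simp
    moreover have "(\<Sum>i=1..K-1. zz N q i / (\<Sum>j=i..K. q j)) = (\<Sum>i=1..K-1. c^N * zz N p i / (1 - c * S p (i-1)))"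
    proof (intro sum.cong refl)
      fix i assume i: "i \<in> {1..K-1}"
      have "S q (i-1) = c * S p (i-1)" using i by (intro Sq) auto
      then have "zz N q i = c^N * zz N p i" using i Sq[of i] zzS[of q i] zzS[of p i]
        by (simp add: power_mult_distrib right_diff_distrib)
      moreover have "(\<Sum>j=i..K. q j) = 1 - c * S p (i-1)" using i tail[OF qsum, of i] \<open>S q (i-1) = c * S p (i-1)\<close> by auto
      ultimately show "zz N q i / (\<Sum>j=i..K. q j) = c^N * zz N p i / (1 - c * S p (i-1))" by simp
    qed
    moreover have "q K = 1 - b'" unfolding q_def b'_def by simp
    ultimately show ?thesis unfolding ff_def by simp
  qed
  define A where "A = p K / (1 - b^N)"
  define B where "B = (1 - b') / (1 - b'^N)"
  have bN: "b^N < 1" using bpos bb' b'1 N by (simp add: power_less_one_iff)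
  have b'N: "b'^N < 1" using bpos bb' b'1 N by (simp add: power_less_one_iff)
  have Apos: "A \<ge> 0" unfolding A_def using bN pnn by simp
  have AB: "A \<le> B * c^N"
  proof -
    have "b^N * (1-b) / (1-b^N) \<le> b'^N * (1-b') / (1-b'^N)" by (rule phi_mono[OF bpos bb' b'1 N])
    moreover have "B * c^N = b'^N * (1-b') / (1-b'^N) / b^N"
      unfolding B_def c_def by (simp add: power_divide)
    moreover have "A = b^N * (1-b) / (1-b^N) / b^N" unfolding A_def b_def using bpos b_def by simp
    ultimately show ?thesis using bpos
      by (metis divide_right_mono zero_le_power less_imp_le)
  qed
  have zznn: "zz N p i \<ge> 0" if "i \<ge> 1" for i
    using zzS[of p i] Smono[of "i-1" i] Snn[of "i-1"] by (simp add: power_mono)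
  have terms: "zz N p i / (1 - S p (i-1)) \<le> zz N p i / (1 - c * S p (i-1))
     \<and> 0 < 1 - c * S p (i-1)" if i: "i \<in> {1..K-1}" for i
  proof -
    have "S p (i-1) \<le> b" using Smono[of "i-1" "K-1"] SK1 i by auto
    hence "c * S p (i-1) \<le> c * b" using c1 by (simp add: mult_left_mono)
    also have "c * b = b'" unfolding c_def using bpos by simp
    finally have lt: "c * S p (i-1) < 1" using b'1 by simp
    have "S p (i-1) \<le> c * S p (i-1)" using c1 Snn[of "i-1"] by (simp add: mult_le_cancel_right1)
    hence "1 - c * S p (i-1) \<le> 1 - S p (i-1)" by simp
    then show ?thesis using lt zznn[of i] i by (auto intro!: divide_left_mono mult_pos_pos)
  qed
  have Ynn: "(\<Sum>i=1..K-1. zz N p i / (1 - c * S p (i-1))) \<ge> 0"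
    using terms zznn by (intro sum_nonneg) (auto intro!: divide_nonneg_pos)
  have "ff N K p = A * (\<Sum>i=1..K-1. zz N p i / (1 - S p (i-1)))" unfolding ffp A_def ..
  also have "\<dots> \<le> A * (\<Sum>i=1..K-1. zz N p i / (1 - c * S p (i-1)))"
    using Apos terms by (intro mult_left_mono sum_mono) auto
  also have "\<dots> \<le> B * c^N * (\<Sum>i=1..K-1. zz N p i / (1 - c * S p (i-1)))"
    using AB Ynn by (rule mult_right_mono)
  also have "\<dots> = ff N K q" unfolding ffq B_def
    by (simp add: sum_distrib_left mult.assoc)
  finally show ?thesis using qeq by blast
qed

theorem lemma4:
  fixes r :: real and N K :: nat
  assumes "r > 1" and "N \<ge> 1" and "K \<ge> 2"
  shows "(SUP p\<in>feasible_ge r K. ereal (ff N K p)) = (SUP p\<in>feasible_eq r K. ereal (ff N K p))"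
proof (rule antisym)
  show "(SUP p\<in>feasible_ge r K. ereal (ff N K p)) \<le> (SUP p\<in>feasible_eq r K. ereal (ff N K p))"
  proof (rule SUP_least)
    fix p assume "p \<in> feasible_ge r K"
    then obtain q where "q \<in> feasible_eq r K" "ff N K p \<le> ff N K q" using key assms by blast
    then show "ereal (ff N K p) \<le> (SUP p\<in>feasible_eq r K. ereal (ff N K p))"
      by (intro SUP_upper2[of q]) auto
  qed
  show "(SUP p\<in>feasible_eq r K. ereal (ff N K p)) \<le> (SUP p\<in>feasible_ge r K. ereal (ff N K p))"
    by (rule SUP_subset_mono) (auto simp: feasible_eq_def feasible_ge_def)
qed

end
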